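(* Let $\mathbb{R}^n_s$ be $\mathbb{R}^n$ with a non-degenerate symmetric bilinear form $\langle\cdot,\cdot\rangle$ of signature $(n-s,s)$, and let $G\subset\mathrm{Iso}(\mathbb{R}^n_s)$ be a real Zariski-closed subgroup whose centralizer in $\mathrm{Iso}(\mathbb{R}^n_s)$ acts transitively on $\mathbb{R}^n$. Fix $p\in\mathbb{R}^n$ and let $(\cdot,\cdot)$ be the orbit metric on $G$, i.e. the pullback of $\langle\cdot,\cdot\rangle$ restricted to the orbit $F_p=G.p$ via the orbit map $g\mapsto g.p$ (a left-invariant, possibly degenerate, field of symmetric bilinear forms). Then $(\cdot,\cdot)$ is bi-invariant: for all left-invariant vector fields $X,Y,Z$ on $G$, $$([X,Y],Z)=-(Y,[X,Z]).$$ *)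

theory Defs
  imports "HOL-Analysis.Analysis"
begin

type_synonym 'n aff = "(real^'n^'n) \<times> (real^'n)"

definition form :: "real^'n^'n \<Rightarrow> real^'n \<Rightarrow> real^'n \<Rightarrow> real" where
  "form S x y = x \<bullet> (S *v y)"

definition nondeg_symmetric :: "real^'n^'n \<Rightarrow> bool" where
  "nondeg_symmetric S \<longleftrightarrow> transpose S = S \<and> invertible S"

definition aff_apply :: "'n::finite aff \<Rightarrow> real^'n \<Rightarrow> real^'n" where
  "aff_apply g x = fst g *v x + snd g"

definition aff_mult :: "'n::finite aff \<Rightarrow> 'n aff \<Rightarrow> 'n aff" where
  "aff_mult g h = (fst g ** fst h, fst g *v snd h + snd g)"

definition aff_one :: "'n::finite aff" where
  "aff_one = (mat 1, 0)"

definition aff_inv :: "'n::finite aff \<Rightarrow> 'n aff" where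
  "aff_inv g = (matrix_inv (fst g), - (matrix_inv (fst g) *v snd g))"

definition Iso :: "real^'n^'n \<Rightarrow> 'n::finite aff set" where
  "Iso S = {g. transpose (fst g) ** S ** fst g = S}"

definition is_subgroup :: "'n::finite aff set \<Rightarrow> 'n aff set \<Rightarrow> bool" where
  "is_subgroup G H \<longleftrightarrow> G \<subseteq> H \<and> aff_one \<in> G \<and>
     (\<forall>g\<in>G. \<forall>h\<in>G. aff_mult g h \<in> G) \<and> (\<forall>g\<in>G. aff_inv g \<in> G)"

inductive_set poly_fun :: "('n::finite aff \<Rightarrow> real) set" where
  const: "(\<lambda>_. c) \<in> poly_fun"
| mat_coord: "(\<lambda>g. fst g $ i $ j) \<in> poly_fun"
| vec_coord: "(\<lambda>g. snd g $ i) \<in> poly_fun"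
| add: "f \<in> poly_fun \<Longrightarrow> h \<in> poly_fun \<Longrightarrow> (\<lambda>g. f g + h g) \<in> poly_fun"
| mult: "f \<in> poly_fun \<Longrightarrow> h \<in> poly_fun \<Longrightarrow> (\<lambda>g. f g * h g) \<in> poly_fun"

definition zariski_closed_in_Iso :: "real^'n^'n \<Rightarrow> 'n::finite aff set \<Rightarrow> bool" where
  "zariski_closed_in_Iso S G \<longleftrightarrow>
     (\<exists>P \<subseteq> poly_fun. G = {g \<in> Iso S. \<forall>f\<in>P. f g = 0})"

definition centralizer_transitive :: "real^'n^'n \<Rightarrow> 'n::finite aff set \<Rightarrow> bool" where
  "centralizer_transitive S G \<longleftrightarrow>
     (\<forall>x y. \<exists>h\<in>Iso S. (\<forall>g\<in>G. aff_mult h g = aff_mult g h) \<and> aff_apply h x = y)"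

definition lie_alg :: "'n::finite aff set \<Rightarrow> 'n aff set" where
  "lie_alg G = {X. \<exists>c. (\<forall>t. c t \<in> G) \<and> c 0 = aff_one \<and>
                    (c has_derivative (\<lambda>t. t *\<^sub>R X)) (at 0)}"

text \<open>Lie bracket of Lie algebra elements (X,v),(Y,w) (commutator of affine matrices).\<close>
definition lie_bracket :: "'n::finite aff \<Rightarrow> 'n aff \<Rightarrow> 'n aff" where
  "lie_bracket X Y = (fst X ** fst Y - fst Y ** fst X, fst X *v snd Y - fst Y *v snd X)"

text \<open>Value at g of the left-invariant vector field generated by X (differential of left
  translation by g).\<close>
definition left_inv_field :: "'n::finite aff \<Rightarrow> 'n aff \<Rightarrow> 'n aff" where
  "left_inv_field g X = (fst g ** fst X, fst g *v snd X)"

text \<open>Orbit map h |-> h.p; it is linear in (A,b), hence equals its own differential.\<close>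
definition orbit_map :: "real^'n \<Rightarrow> 'n::finite aff \<Rightarrow> real^'n" where
  "orbit_map p h = aff_apply h p"

text \<open>Orbit metric: pullback of the form via the orbit map, evaluated on tangent vectors U, V
  (at any point of G).\<close>
definition orbit_metric :: "real^'n^'n \<Rightarrow> real^'n \<Rightarrow> 'n::finite aff \<Rightarrow> 'n aff \<Rightarrow> real" where
  "orbit_metric S p U V = form S (orbit_map p U) (orbit_map p V)"

end

theory Submission
  imports Defs
begin

lemma lin_const_deriv:
  fixes c :: "real \<Rightarrow> 'a::real_normed_vector" and L :: "'a \<Rightarrow> 'b::real_normed_vector"
  assumes d: "(c has_derivative (\<lambda>t. t *\<^sub>R X)) (at 0)" and L: "bounded_linear L"
    and k: "\<And>t. L (c t) = k"
  shows "L X = 0"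
proof -
  have 1: "((\<lambda>t. L (c t)) has_derivative (\<lambda>t. L (t *\<^sub>R X))) (at 0)"
    using bounded_linear.has_derivative[OF L d] .
  have 2: "((\<lambda>t. L (c t)) has_derivative (\<lambda>t. 0)) (at 0)"
    using k by simp
  have "(\<lambda>t. L (t *\<^sub>R X)) = (\<lambda>t. 0)" using has_derivative_unique[OF 1 2] .
  then have "L (1 *\<^sub>R X) = 0" by metis
  then show ?thesis by simp
qed

lemma lin_pair:
  fixes L :: "'n::finite aff \<Rightarrow> real^'n"
  assumes "\<And>x y. L (x + y) = L x + L y" "\<And>r x. L (r *\<^sub>R x) = r *\<^sub>R L x"
  shows "bounded_linear L"
  unfolding linear_conv_bounded_linear[symmetric] by (rule linearI; fact)

lemma comm_lie:
  assumes X: "X \<in> lie_alg G" and h: "\<forall>g\<in>G. aff_mult h g = aff_mult g h"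
  shows "fst h *v (fst X *v v) = fst X *v (fst h *v v)"
    and "fst h *v snd X = fst X *v snd h + snd X"
proof -
  obtain c where cG: "\<And>t. c t \<in> G" and c0: "c 0 = aff_one"
    and d: "(c has_derivative (\<lambda>t. t *\<^sub>R X)) (at 0)"
    using X unfolding lie_alg_def by blast
  have e: "aff_mult h (c t) = aff_mult (c t) h" for t using h cG by blast
  have e1: "fst h ** fst (c t) = fst (c t) ** fst h" for t
    using e[of t] by (simp add: aff_mult_def)
  have e2: "fst h *v snd (c t) + snd h = fst (c t) *v snd h + snd (c t)" for t
    using e[of t] by (simp add: aff_mult_def)
  let ?L1 = "\<lambda>x::'a aff. fst h *v (fst x *v v) - fst x *v (fst h *v v)"
  have "?L1 X = 0"
  proof (rule lin_const_deriv[OF d])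
    show "bounded_linear ?L1"
      by (rule lin_pair) (auto simp: matrix_vector_mult_add_rdistrib matrix_vector_right_distrib
          matrix_vector_mult_scaleR algebra_simps scaleR_matrix_vector_assoc[symmetric])
    show "?L1 (c t) = 0" for t
      using e1[of t] by (simp add: matrix_vector_mul_assoc)
  qed
  then show "fst h *v (fst X *v v) = fst X *v (fst h *v v)" by simp
  let ?L2 = "\<lambda>x::'a aff. fst h *v snd x - fst x *v snd h - snd x"
  have "?L2 X = 0"
  proof (rule lin_const_deriv[OF d])
    show "bounded_linear ?L2"
      by (rule lin_pair) (auto simp: matrix_vector_mult_add_rdistrib matrix_vector_right_distrib
          matrix_vector_mult_scaleR algebra_simps scaleR_matrix_vector_assoc[symmetric])
    show "?L2 (c t) = - snd h" for t
      using e2[of t] by (simp add: algebra_simps)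
  qed
  then show "fst h *v snd X = fst X *v snd h + snd X" by (simp add: algebra_simps)
qed

lemma skew_lie:
  assumes X: "X \<in> lie_alg G" and GI: "G \<subseteq> Iso S"
  shows "(fst X *v u) \<bullet> (S *v v) + u \<bullet> (S *v (fst X *v v)) = 0"
proof -
  obtain c where cG: "\<And>t. c t \<in> G" and c0: "c 0 = aff_one"
    and d: "(c has_derivative (\<lambda>t. t *\<^sub>R X)) (at 0)"
    using X unfolding lie_alg_def by blast
  have iso: "transpose (fst (c t)) ** S ** fst (c t) = S" for t
    using cG[of t] GI by (auto simp: Iso_def)
  have const: "(fst (c t) *v u) \<bullet> (S *v (fst (c t) *v v)) = u \<bullet> (S *v v)" for t
  proof -
    have "(fst (c t) *v u) \<bullet> (S *v (fst (c t) *v v)) = u \<bullet> ((transpose (fst (c t)) ** S ** fst (c t)) *v v)"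
      by (metis dot_lmul_matrix matrix_vector_mul_assoc transpose_transpose vector_transpose_matrix)
    then show ?thesis using iso[of t] by simp
  qed
  have dA: "((\<lambda>t. fst (c t)) has_derivative (\<lambda>t. t *\<^sub>R fst X)) (at 0)"
    using has_derivative_fst[OF d] by simp
  have bl1: "bounded_linear (\<lambda>M::real^'a^'a. M *v u)"
    unfolding linear_conv_bounded_linear[symmetric] by (rule linearI; simp add: matrix_vector_mult_add_rdistrib scaleR_matrix_vector_assoc[symmetric])
  have bl2: "bounded_linear (\<lambda>M::real^'a^'a. S *v (M *v v))"
    unfolding linear_conv_bounded_linear[symmetric] by (rule linearI; simp add: matrix_vector_mult_add_rdistrib matrix_vector_right_distrib scaleR_matrix_vector_assoc[symmetric] matrix_vector_mult_scaleR)
  have f: "((\<lambda>t. fst (c t) *v u) has_derivative (\<lambda>t. (t *\<^sub>R fst X) *v u)) (at 0)"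
    using bounded_linear.has_derivative[OF bl1 dA] .
  have g: "((\<lambda>t. S *v (fst (c t) *v v)) has_derivative (\<lambda>t. S *v ((t *\<^sub>R fst X) *v v))) (at 0)"
    using bounded_linear.has_derivative[OF bl2 dA] .
  have fg: "((\<lambda>t. (fst (c t) *v u) \<bullet> (S *v (fst (c t) *v v))) has_derivative
     (\<lambda>t. (fst (c 0) *v u) \<bullet> (S *v ((t *\<^sub>R fst X) *v v)) + ((t *\<^sub>R fst X) *v u) \<bullet> (S *v (fst (c 0) *v v)))) (at 0)"
    using has_derivative_inner[OF f g] by simp
  have fg2: "((\<lambda>t. (fst (c t) *v u) \<bullet> (S *v (fst (c t) *v v))) has_derivative (\<lambda>t. 0)) (at 0)"
    using const by simp
  from has_derivative_unique[OF fg fg2]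
  have "(fst (c 0) *v u) \<bullet> (S *v ((1 *\<^sub>R fst X) *v v)) + ((1 *\<^sub>R fst X) *v u) \<bullet> (S *v (fst (c 0) *v v)) = 0"
    by metis
  then show ?thesis using c0 by (simp add: aff_one_def add.commute)
qed


lemma form_iso:
  assumes "transpose A ** S ** A = S"
  shows "form S (A *v u) (A *v v) = form S u v"
proof -
  have "(A *v u) \<bullet> (S *v (A *v v)) = u \<bullet> ((transpose A ** S ** A) *v v)"
    by (metis dot_lmul_matrix matrix_vector_mul_assoc transpose_transpose vector_transpose_matrix)
  then show ?thesis using assms by (simp add: form_def)
qed

lemma om_bracket:
  "orbit_map p (lie_bracket X Y) = fst X *v orbit_map p Y - fst Y *v orbit_map p X"
  by (simp add: orbit_map_def aff_apply_def lie_bracket_def matrix_vector_mult_diff_rdistrib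
      matrix_vector_right_distrib matrix_vector_mult_diff_distrib matrix_vector_mul_assoc algebra_simps)

lemma om_left:
  "orbit_map p (left_inv_field g W) = fst g *v orbit_map p W"
  by (simp add: orbit_map_def aff_apply_def left_inv_field_def
      matrix_vector_right_distrib matrix_vector_mul_assoc)

theorem proposition4p5:
  fixes S :: "real^'n::finite^'n" and G :: "'n aff set" and p :: "real^'n"
  assumes "nondeg_symmetric S"
    and "is_subgroup G (Iso S)"
    and "zariski_closed_in_Iso S G"
    and "centralizer_transitive S G"
  shows "\<forall>g\<in>G. \<forall>X\<in>lie_alg G. \<forall>Y\<in>lie_alg G. \<forall>Z\<in>lie_alg G.
     orbit_metric S p (left_inv_field g (lie_bracket X Y)) (left_inv_field g Z)
       = - orbit_metric S p (left_inv_field g Y) (left_inv_field g (lie_bracket X Z))"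
proof (intro ballI)
  fix g X Y Z assume g: "g \<in> G" and X: "X \<in> lie_alg G" and Y: "Y \<in> lie_alg G" and Z: "Z \<in> lie_alg G"
  have GI: "G \<subseteq> Iso S" using assms(2) by (simp add: is_subgroup_def)
  have gI: "transpose (fst g) ** S ** fst g = S" using g GI by (auto simp: Iso_def)
  have formlin: "form S (a + b) c = form S a c + form S b c" "form S (a - b) c = form S a c - form S b c"
    "form S c (a + b) = form S c a + form S c b" "form S c (a - b) = form S c a - form S c b"
    for a b c :: "real^'n"
    by (simp_all add: form_def inner_add_left inner_diff_left matrix_vector_right_distrib
        matrix_vector_mult_diff_distrib inner_add_right inner_diff_right)
  have om_shift: "orbit_map (q + v) W = orbit_map q W + fst W *v v"
    "orbit_map (q - v) W = orbit_map q W - fst W *v v" for q v W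
    by (simp_all add: orbit_map_def aff_apply_def matrix_vector_right_distrib matrix_vector_mult_diff_distrib algebra_simps)
  have phi: "form S (orbit_map q Y) (orbit_map q Z) = form S (orbit_map p Y) (orbit_map p Z)" for q
  proof -
    obtain h where hI: "h \<in> Iso S" and hc: "\<forall>g\<in>G. aff_mult h g = aff_mult g h"
      and hp: "aff_apply h p = q"
      using assms(4) unfolding centralizer_transitive_def by blast
    have tr: "orbit_map q W = fst h *v orbit_map p W" if W: "W \<in> lie_alg G" for W
    proof -
      have "orbit_map q W = fst W *v (fst h *v p) + (fst W *v snd h + snd W)"
        unfolding hp[symmetric] by (simp add: orbit_map_def aff_apply_def matrix_vector_right_distrib algebra_simps)
      also have "\<dots> = fst h *v (fst W *v p) + fst h *v snd W"
        using comm_lie[OF W hc] by simp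
      finally show ?thesis by (simp add: orbit_map_def aff_apply_def matrix_vector_right_distrib)
    qed
    show ?thesis using tr[OF Y] tr[OF Z] form_iso[of "fst h" S] hI by (simp add: Iso_def)
  qed
  define x where "x = orbit_map p X"
  define y where "y = orbit_map p Y"
  define z where "z = orbit_map p Z"
  have p1: "form S (y + fst Y *v x) (z + fst Z *v x) = form S y z"
    using phi[of "p + x"] by (simp add: om_shift y_def z_def)
  have p2: "form S (y - fst Y *v x) (z - fst Z *v x) = form S y z"
    using phi[of "p - x"] by (simp add: om_shift y_def z_def)
  have key: "form S (fst Y *v x) z + form S y (fst Z *v x) = 0"
    using p1 p2 by (simp add: formlin algebra_simps)
  have sk: "form S (fst X *v y) z = - form S y (fst X *v z)"
    using skew_lie[OF X GI, of y z] by (simp add: form_def)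
  show "orbit_metric S p (left_inv_field g (lie_bracket X Y)) (left_inv_field g Z)
       = - orbit_metric S p (left_inv_field g Y) (left_inv_field g (lie_bracket X Z))"
    unfolding orbit_metric_def om_left form_iso[OF gI] om_bracket
    using key sk by (simp add: formlin x_def[symmetric] y_def[symmetric] z_def[symmetric])
qed

end
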